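(* The Lie algebra $\mathcal W$ (even part of $W(m,n;\underline t)$, over a field of characteristic $p>3$, $m,n\ge3$) is generated by $\mathcal M\cup\mathcal N\cup\mathcal P$, where $\mathcal M=\{x^{(q\varepsilon_i)}D_j\mid 0\le q\le\pi_i,\ i,j\in Y_0\}$, $\mathcal N=\{x_ix_kD_l\mid i\in Y_0,\ k,l\in Y_1\}$, $\mathcal P=\{x_kx_lD_i\mid i\in Y_0,\ k,l\in Y_1\}$.
   Context: $\mathbb F$ is a field of characteristic $p>3$; $m,n\ge 3$; $\underline t=(t_1,\dots,t_m)$ positive integers, $\pi_i=p^{t_i}-1$. $Y_0=\{1,\dots,m\}$, $Y_1=\{m+1,\dots,m+n\}$, $Y=Y_0\cup Y_1$, $\tau(r)=\bar0$ on $Y_0$, $\bar1$ on $Y_1$. $\mathfrak A=\mathfrak A(m,n;\underline t)$ is the supercommutative superalgebra with basis $x^{(\alpha)}x^u$ ($\alpha\in\mathbb N_0^m$, $\alpha_i\le\pi_i$; $u$ an increasing sequence in $Y_1$, $x^u$ the product of the odd generators $x_k$, $k\in u$), with $x^{(\alpha)}x^{(\beta)}=\prod_i\binom{\alpha_i+\beta_i}{\alpha_i}x^{(\alpha+\beta)}$ (zero if some index exceeds $\pi_i$), anticommuting $x_k$, parity $|u|\bmod2$; $x_i=x^{(\varepsilon_i)}$ for $i\in Y_0$ and $\varepsilon_i$ is the $i$-th unit vector. $D_i$ ($i\in Y_0$) sends $x^{(\alpha)}x^u\mapsto x^{(\alpha-\varepsilon_i)}x^u$, $D_k$ ($k\in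 Y_1$) is the odd partial derivative $\partial/\partial x_k$; $D_r$ has parity $\tau(r)$. $W=W(m,n;\underline t)=\{\sum_{r\in Y} f_rD_r:f_r\in\mathfrak A\}$ with bracket $[fD_r,gD_s]=fD_r(g)D_s-(-1)^{\mathrm p(fD_r)\mathrm p(gD_s)}gD_s(f)D_r$; $x^{(\alpha)}x^uD_r$ has parity $|u|+\tau(r)$. $\mathcal W=W_{\bar0}$. *)

theory Defs
  imports Main "HOL-Computational_Algebra.Primes"
begin

text \<open>Generalized Witt superalgebra W(m,n;t) over a field 'a of characteristic p.
Basis monomials of the divided-power Grassmann superalgebra A(m,n;t) are indexed by
pairs (alpha,u): alpha :: nat => nat (exponent vector, supported in {1..m}, alpha i <= pi i),
u a subset of Y1 = {m+1..m+n} (standing for the increasing sequence of its elements).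
Elements of A are coefficient functions on these indices; elements of W are coefficient
functions on triples (alpha,u,r) standing for x^(alpha) x^u D_r with r in Y = {1..m+n}.\<close>

type_synonym aidx = "(nat \<Rightarrow> nat) \<times> nat set"
type_synonym widx = "(nat \<Rightarrow> nat) \<times> nat set \<times> nat"

definition Y0 :: "nat \<Rightarrow> nat set" where "Y0 m = {1..m}"
definition Y1 :: "nat \<Rightarrow> nat \<Rightarrow> nat set" where "Y1 m n = {m+1..m+n}"
definition Y :: "nat \<Rightarrow> nat \<Rightarrow> nat set" where "Y m n = Y0 m \<union> Y1 m n"

definition tau :: "nat \<Rightarrow> nat \<Rightarrow> nat" where "tau m r = (if r \<le> m then 0 else 1)"

definition piw :: "nat \<Rightarrow> (nat \<Rightarrow> nat) \<Rightarrow> nat \<Rightarrow> nat" where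
  "piw p t i = p ^ t i - 1"

definition ABasis :: "nat \<Rightarrow> nat \<Rightarrow> nat \<Rightarrow> (nat \<Rightarrow> nat) \<Rightarrow> aidx set" where
  "ABasis p m n t = {(\<alpha>, u). (\<forall>i. i \<notin> Y0 m \<longrightarrow> \<alpha> i = 0) \<and>
      (\<forall>i\<in>Y0 m. \<alpha> i \<le> piw p t i) \<and> u \<subseteq> Y1 m n}"

definition WBasis :: "nat \<Rightarrow> nat \<Rightarrow> nat \<Rightarrow> (nat \<Rightarrow> nat) \<Rightarrow> widx set" where
  "WBasis p m n t = {(\<alpha>, u, r). (\<alpha>, u) \<in> ABasis p m n t \<and> r \<in> Y m n}"

text \<open>sign of x^u x^v = sign * x^(u union v) for disjoint u, v: number of inversions\<close>
definition gsign :: "nat set \<Rightarrow> nat set \<Rightarrow> 'a::field" where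
  "gsign u v = (-1) ^ card {(k, l). k \<in> u \<and> l \<in> v \<and> l < k}"

definition mono_mul :: "nat \<Rightarrow> nat \<Rightarrow> (nat \<Rightarrow> nat) \<Rightarrow> aidx \<Rightarrow> aidx \<Rightarrow> aidx \<Rightarrow> 'a::field" where
  "mono_mul p m t a b c = (case a of (\<alpha>, u) \<Rightarrow> case b of (\<beta>, v) \<Rightarrow> case c of (\<gamma>, w) \<Rightarrow>
     (if (\<forall>i\<in>Y0 m. \<alpha> i + \<beta> i \<le> piw p t i) \<and> \<gamma> = (\<lambda>i. \<alpha> i + \<beta> i) \<and> u \<inter> v = {} \<and> w = u \<union> v
      then of_nat (\<Prod>i\<in>Y0 m. (\<alpha> i + \<beta> i) choose \<alpha> i) * gsign u v else 0))"

definition amul :: "nat \<Rightarrow> nat \<Rightarrow> nat \<Rightarrow> (nat \<Rightarrow> nat) \<Rightarrow> (aidx \<Rightarrow> 'a::field) \<Rightarrow> (aidx \<Rightarrow> 'a) \<Rightarrow> aidx \<Rightarrow> 'a" where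
  "amul p m n t f g c = (\<Sum>a\<in>ABasis p m n t. \<Sum>b\<in>ABasis p m n t. f a * g b * mono_mul p m t a b c)"

definition deriv_mono :: "nat \<Rightarrow> nat \<Rightarrow> aidx \<Rightarrow> aidx \<Rightarrow> 'a::field" where
  "deriv_mono m r a c = (case a of (\<alpha>, u) \<Rightarrow> case c of (\<gamma>, w) \<Rightarrow>
     (if r \<in> Y0 m then (if 1 \<le> \<alpha> r \<and> \<gamma> = \<alpha>(r := \<alpha> r - 1) \<and> w = u then 1 else 0)
      else (if r \<in> u \<and> \<gamma> = \<alpha> \<and> w = u - {r} then (-1) ^ card {l\<in>u. l < r} else 0)))"

definition aderiv :: "nat \<Rightarrow> nat \<Rightarrow> nat \<Rightarrow> (nat \<Rightarrow> nat) \<Rightarrow> nat \<Rightarrow> (aidx \<Rightarrow> 'a::field) \<Rightarrow> aidx \<Rightarrow> 'a" where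
  "aderiv p m n t r f c = (\<Sum>a\<in>ABasis p m n t. f a * deriv_mono m r a c)"

definition amono :: "aidx \<Rightarrow> aidx \<Rightarrow> 'a::field" where
  "amono a c = (if c = a then 1 else 0)"

text \<open>the element f D_r of W, for f in A\<close>
definition aD :: "(aidx \<Rightarrow> 'a::field) \<Rightarrow> nat \<Rightarrow> widx \<Rightarrow> 'a" where
  "aD f r c = (case c of (\<gamma>, w, s) \<Rightarrow> if s = r then f (\<gamma>, w) else 0)"

definition bracket_basis :: "nat \<Rightarrow> nat \<Rightarrow> nat \<Rightarrow> (nat \<Rightarrow> nat) \<Rightarrow> widx \<Rightarrow> widx \<Rightarrow> widx \<Rightarrow> 'a::field" where
  "bracket_basis p m n t a b = (case a of (\<alpha>, u, r) \<Rightarrow> case b of (\<beta>, v, s) \<Rightarrow>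
     (\<lambda>c. aD (amul p m n t (amono (\<alpha>, u)) (aderiv p m n t r (amono (\<beta>, v)))) s c
        - (-1) ^ ((card u + tau m r) * (card v + tau m s))
          * aD (amul p m n t (amono (\<beta>, v)) (aderiv p m n t s (amono (\<alpha>, u)))) r c))"

definition wbracket :: "nat \<Rightarrow> nat \<Rightarrow> nat \<Rightarrow> (nat \<Rightarrow> nat) \<Rightarrow> (widx \<Rightarrow> 'a::field) \<Rightarrow> (widx \<Rightarrow> 'a) \<Rightarrow> widx \<Rightarrow> 'a" where
  "wbracket p m n t X Z c = (\<Sum>a\<in>WBasis p m n t. \<Sum>b\<in>WBasis p m n t. X a * Z b * bracket_basis p m n t a b c)"

definition Wsp :: "nat \<Rightarrow> nat \<Rightarrow> nat \<Rightarrow> (nat \<Rightarrow> nat) \<Rightarrow> (widx \<Rightarrow> 'a::field) set" where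
  "Wsp p m n t = {X. \<forall>c. c \<notin> WBasis p m n t \<longrightarrow> X c = 0}"

definition Weven :: "nat \<Rightarrow> nat \<Rightarrow> nat \<Rightarrow> (nat \<Rightarrow> nat) \<Rightarrow> (widx \<Rightarrow> 'a::field) set" where
  "Weven p m n t = {X \<in> Wsp p m n t. \<forall>\<alpha> u r. X (\<alpha>, u, r) \<noteq> 0 \<longrightarrow> even (card u + tau m r)}"

inductive_set lie_gen :: "nat \<Rightarrow> nat \<Rightarrow> nat \<Rightarrow> (nat \<Rightarrow> nat) \<Rightarrow> (widx \<Rightarrow> 'a::field) set \<Rightarrow> (widx \<Rightarrow> 'a) set"
  for p m n t S where
  gen_base: "X \<in> S \<Longrightarrow> X \<in> lie_gen p m n t S"
| gen_zero: "(\<lambda>c. 0) \<in> lie_gen p m n t S"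
| gen_add: "X \<in> lie_gen p m n t S \<Longrightarrow> Z \<in> lie_gen p m n t S \<Longrightarrow> (\<lambda>c. X c + Z c) \<in> lie_gen p m n t S"
| gen_smult: "X \<in> lie_gen p m n t S \<Longrightarrow> (\<lambda>c. k * X c) \<in> lie_gen p m n t S"
| gen_bracket: "X \<in> lie_gen p m n t S \<Longrightarrow> Z \<in> lie_gen p m n t S \<Longrightarrow> wbracket p m n t X Z \<in> lie_gen p m n t S"

definition dpow :: "nat \<Rightarrow> nat \<Rightarrow> aidx \<Rightarrow> 'a::field" where
  "dpow q i = amono ((\<lambda>j. if j = i then q else 0), {})"

definition xgen :: "nat \<Rightarrow> nat \<Rightarrow> aidx \<Rightarrow> 'a::field" where
  "xgen m k = (if k \<le> m then dpow 1 k else amono ((\<lambda>j. 0), {k}))"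

definition Mset :: "nat \<Rightarrow> nat \<Rightarrow> nat \<Rightarrow> (nat \<Rightarrow> nat) \<Rightarrow> (widx \<Rightarrow> 'a::field) set" where
  "Mset p m n t = {aD (dpow q i) j | q i j. i \<in> Y0 m \<and> j \<in> Y0 m \<and> q \<le> piw p t i}"

definition Nset :: "nat \<Rightarrow> nat \<Rightarrow> nat \<Rightarrow> (nat \<Rightarrow> nat) \<Rightarrow> (widx \<Rightarrow> 'a::field) set" where
  "Nset p m n t = {aD (amul p m n t (xgen m i) (xgen m k)) l | i k l.
      i \<in> Y0 m \<and> k \<in> Y1 m n \<and> l \<in> Y1 m n}"

definition Pset :: "nat \<Rightarrow> nat \<Rightarrow> nat \<Rightarrow> (nat \<Rightarrow> nat) \<Rightarrow> (widx \<Rightarrow> 'a::field) set" where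
  "Pset p m n t = {aD (amul p m n t (xgen m k) (xgen m l)) i | i k l.
      i \<in> Y0 m \<and> k \<in> Y1 m n \<and> l \<in> Y1 m n}"

end

theory Submission imports Defs begin

lemma finite_ABasis: "finite (ABasis p m n t)"
proof -
  let ?F = "{f::nat\<Rightarrow>nat. \<forall>x. (x \<in> Y0 m \<longrightarrow> f x \<in> {0..Max (piw p t ` Y0 m)}) \<and> (x \<notin> Y0 m \<longrightarrow> f x = 0)}"
  have fF: "finite ?F" by (rule finite_set_of_finite_funs) (auto simp: Y0_def)
  have "ABasis p m n t \<subseteq> ?F \<times> Pow (Y1 m n)"
  proof
    fix x assume x: "x \<in> ABasis p m n t"
    obtain a u where xe: "x = (a,u)" by force
    have "\<forall>i\<in>Y0 m. a i \<le> Max (piw p t ` Y0 m)"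
    proof
      fix i assume i: "i \<in> Y0 m"
      have "piw p t i \<le> Max (piw p t ` Y0 m)" using i by (intro Max_ge) (auto simp: Y0_def)
      then show "a i \<le> Max (piw p t ` Y0 m)" using x xe i by (auto simp: ABasis_def)
    qed
    then show "x \<in> ?F \<times> Pow (Y1 m n)" using x xe by (auto simp: ABasis_def)
  qed
  moreover have "finite (?F \<times> Pow (Y1 m n))" using fF by (auto simp: Y1_def)
  ultimately show ?thesis by (rule finite_subset)
qed

lemma finite_WBasis: "finite (WBasis p m n t)"
proof -
  have "WBasis p m n t \<subseteq> (\<lambda>((a,u),r). (a,u,r)) ` (ABasis p m n t \<times> Y m n)"
    by (force simp: WBasis_def)
  moreover have "finite (Y m n)" by (simp add: Y_def Y0_def Y1_def)
  ultimately show ?thesis using finite_ABasis by (meson finite_SigmaI finite_imageI finite_subset)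
qed

definition Eb :: "widx \<Rightarrow> widx \<Rightarrow> 'a::field" where
  "Eb a c = (if c = a then 1 else 0)"

definition hb :: "nat \<Rightarrow> nat \<Rightarrow> nat \<Rightarrow> (nat \<Rightarrow> nat) \<Rightarrow> widx \<Rightarrow> widx \<Rightarrow> widx \<Rightarrow> 'a::field" where
  "hb p m n t a b = (case a of (\<alpha>, u, r) \<Rightarrow> case b of (\<beta>, v, s) \<Rightarrow>
     aD (amul p m n t (amono (\<alpha>, u)) (aderiv p m n t r (amono (\<beta>, v)))) s)"

lemma bb_split: "bracket_basis p m n t (\<alpha>,u,r) (\<beta>,v,s) =
  (\<lambda>c. hb p m n t (\<alpha>,u,r) (\<beta>,v,s) c - (-1) ^ ((card u + tau m r) * (card v + tau m s)) * hb p m n t (\<beta>,v,s) (\<alpha>,u,r) c)"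
  by (simp add: bracket_basis_def hb_def)

lemma sum_delta_mult:
  assumes "finite A" "x \<in> A"
  shows "(\<Sum>a\<in>A. (if a = x then 1 else 0) * f a) = (f x :: 'a::comm_ring_1)"
proof -
  have "(\<Sum>a\<in>A. (if a = x then 1 else 0) * f a) = (\<Sum>a\<in>A. if a = x then f a else 0)"
    by (intro sum.cong) auto
  also have "\<dots> = f x" using assms by simp
  finally show ?thesis .
qed

lemma sum_delta_mult2:
  assumes "finite A" "x \<in> A"
  shows "(\<Sum>a\<in>A. (if x = a then 1 else 0) * f a) = (f x :: 'a::comm_ring_1)"
proof -
  have "(\<Sum>a\<in>A. (if x = a then 1 else 0) * f a) = (\<Sum>a\<in>A. if a = x then f a else 0)"
    by (intro sum.cong) auto
  also have "\<dots> = f x" using assms by simp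
  finally show ?thesis .
qed

lemma wbracket_Eb:
  assumes "a \<in> WBasis p m n t" "b \<in> WBasis p m n t"
  shows "wbracket p m n t (Eb a) (Eb b) = bracket_basis p m n t a b"
proof
  fix c
  have "wbracket p m n t (Eb a) (Eb b) c = (\<Sum>x\<in>WBasis p m n t. (if x = a then 1 else 0) *
          (\<Sum>y\<in>WBasis p m n t. (if y = b then 1 else 0) * bracket_basis p m n t x y c))"
    unfolding wbracket_def Eb_def by (simp add: sum_distrib_left mult.assoc)
  also have "\<dots> = bracket_basis p m n t a b c"
    by (simp add: sum_delta_mult[OF finite_WBasis assms(1)] sum_delta_mult[OF finite_WBasis assms(2)])
  finally show "wbracket p m n t (Eb a) (Eb b) c = bracket_basis p m n t a b c" .
qed

lemma aderiv_amono:
  assumes "x \<in> ABasis p m n t"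
  shows "aderiv p m n t r (amono x) = deriv_mono m r x"
  unfolding aderiv_def amono_def fun_eq_iff
  by (simp add: sum_delta_mult[OF finite_ABasis assms])

lemma amul_amono:
  assumes "x \<in> ABasis p m n t"
  shows "amul p m n t (amono x) g c = (\<Sum>b\<in>ABasis p m n t. g b * mono_mul p m t x b c)"
  unfolding amul_def amono_def
  by (simp add: mult.assoc sum_distrib_left[symmetric] sum_delta_mult[OF finite_ABasis assms])

lemma amul_amono_amono:
  assumes "x \<in> ABasis p m n t" "y \<in> ABasis p m n t"
  shows "amul p m n t (amono x) (amono y) = mono_mul p m t x y"
  unfolding fun_eq_iff amul_amono[OF assms(1)]
  by (simp add: amono_def sum_delta_mult[OF finite_ABasis assms(2)])

lemma hb_zero:
  assumes "(r \<in> Y0 m \<and> \<beta> r = 0) \<or> (r \<notin> Y0 m \<and> r \<notin> v)" "(\<beta>,v) \<in> ABasis p m n t"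
  shows "hb p m n t (\<alpha>,u,r) (\<beta>,v,s) = (\<lambda>c. 0 :: 'a::field)"
proof -
  have d: "aderiv p m n t r (amono (\<beta>,v)) = (\<lambda>c. 0 :: 'a)"
    unfolding aderiv_amono[OF assms(2)] using assms(1) by (auto simp: deriv_mono_def)
  show ?thesis unfolding hb_def by (simp add: d amul_def aD_def fun_eq_iff)
qed

lemma deriv_mono_Y0:
  assumes "r \<in> Y0 m" "1 \<le> \<beta> r"
  shows "deriv_mono m r (\<beta>,v) = (amono (\<beta>(r := \<beta> r - 1), v) :: aidx \<Rightarrow> 'a::field)"
  using assms by (auto simp: deriv_mono_def amono_def fun_eq_iff)

lemma mono_mul_disj:
  assumes "(\<alpha>,u) \<in> ABasis p m n t" "(\<beta>,v) \<in> ABasis p m n t"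
    and "\<forall>i\<in>Y0 m. \<alpha> i = 0 \<or> \<beta> i = 0" "u \<inter> v = {}"
  shows "mono_mul p m t (\<alpha>,u) (\<beta>,v) = (\<lambda>c. if c = ((\<lambda>i. \<alpha> i + \<beta> i), u \<union> v) then gsign u v else (0::'a::field))"
proof
  fix c :: aidx
  obtain \<gamma> w where c: "c = (\<gamma>, w)" by force
  have b: "\<forall>i\<in>Y0 m. \<alpha> i + \<beta> i \<le> piw p t i" using assms(1,2,3) by (auto simp: ABasis_def)
  have pr: "(\<Prod>i\<in>Y0 m. (\<alpha> i + \<beta> i) choose \<alpha> i) = 1"
    by (rule prod.neutral) (use assms(3) in auto)
  show "mono_mul p m t (\<alpha>,u) (\<beta>,v) c = (if c = ((\<lambda>i. \<alpha> i + \<beta> i), u \<union> v) then gsign u v else 0)"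
    unfolding c mono_mul_def using b pr assms(4) by auto
qed

lemma aD_single: "aD (\<lambda>c. if c = (\<gamma>, w) then k else 0) s = (\<lambda>c. k * (Eb (\<gamma>, w, s) c :: 'a::field))"
  by (auto simp: aD_def Eb_def fun_eq_iff)

lemma hb_H:
  assumes "r \<in> Y0 m" "(\<alpha>,u) \<in> ABasis p m n t" "(\<beta>,v) \<in> ABasis p m n t" "1 \<le> \<beta> r"
    and "\<forall>i\<in>Y0 m. \<alpha> i = 0 \<or> (\<beta>(r := \<beta> r - 1)) i = 0" "u \<inter> v = {}"
  shows "hb p m n t (\<alpha>,u,r) (\<beta>,v,s) = (\<lambda>c. gsign u v * (Eb ((\<lambda>i. \<alpha> i + (\<beta>(r := \<beta> r - 1)) i), u \<union> v, s) c :: 'a::field))"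
proof -
  have B': "(\<beta>(r := \<beta> r - 1), v) \<in> ABasis p m n t" using assms(1,3) by (auto simp: ABasis_def)
  have "hb p m n t (\<alpha>,u,r) (\<beta>,v,s) = aD (amul p m n t (amono (\<alpha>,u)) (amono (\<beta>(r := \<beta> r - 1), v))) s"
    unfolding hb_def by (simp add: aderiv_amono[OF assms(3)] deriv_mono_Y0[where r=r and \<beta>=\<beta>, OF assms(1,4)])
  also have "\<dots> = aD (mono_mul p m t (\<alpha>,u) (\<beta>(r := \<beta> r - 1), v)) s"
    unfolding amul_amono_amono[OF assms(2) B'] ..
  also have "\<dots> = (\<lambda>c. gsign u v * (Eb ((\<lambda>i. \<alpha> i + (\<beta>(r := \<beta> r - 1)) i), u \<union> v, s) c :: 'a::field))"
    unfolding mono_mul_disj[OF assms(2) B' assms(5,6)] aD_single ..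
  finally show ?thesis .
qed

lemma gsign_ne0: "gsign u v \<noteq> (0::'a::field)"
  by (simp add: gsign_def)

lemma gsign_empty1[simp]: "gsign {} v = 1" by (simp add: gsign_def)
lemma gsign_empty2[simp]: "gsign u {} = 1" by (simp add: gsign_def)

lemma lie_gen_unsmult:
  assumes "(\<lambda>c. k * X c) \<in> lie_gen p m n t S" "k \<noteq> (0::'a::field)"
  shows "X \<in> lie_gen p m n t S"
proof -
  have "(\<lambda>c. inverse k * (k * X c)) \<in> lie_gen p m n t S"
    using lie_gen.gen_smult[OF assms(1)] by simp
  moreover have "(\<lambda>c. inverse k * (k * X c)) = X" using assms(2) by (auto simp: fun_eq_iff mult.assoc[symmetric])
  ultimately show ?thesis by simp
qed

lemma gen_step1:
  assumes "a \<in> WBasis p m n t" "b \<in> WBasis p m n t"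
    and "Eb a \<in> lie_gen p m n t S" "Eb b \<in> lie_gen p m n t S"
    and "hb p m n t a b = (\<lambda>c. k * (Eb e c :: 'a::field))" "hb p m n t b a = (\<lambda>c. 0::'a)" "k \<noteq> (0::'a)"
  shows "(Eb e :: widx \<Rightarrow> 'a) \<in> lie_gen p m n t S"
proof -
  obtain \<alpha> u r \<beta> v s where ab: "a = (\<alpha>,u,r)" "b = (\<beta>,v,s)" by (metis prod_cases3)
  have "wbracket p m n t (Eb a) (Eb b) = (\<lambda>c. k * Eb e c)"
    unfolding wbracket_Eb[OF assms(1,2)] using assms(5,6) unfolding ab bb_split by simp
  then have "(\<lambda>c. k * Eb e c) \<in> lie_gen p m n t S"
    using lie_gen.gen_bracket[OF assms(3,4)] by simp
  then show ?thesis using lie_gen_unsmult assms(7) by blast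
qed

lemma gen_step2:
  assumes "(\<alpha>,u,r) \<in> WBasis p m n t" "(\<beta>,v,s) \<in> WBasis p m n t"
    and "Eb (\<alpha>,u,r) \<in> lie_gen p m n t S" "Eb (\<beta>,v,s) \<in> lie_gen p m n t S"
    and "hb p m n t (\<alpha>,u,r) (\<beta>,v,s) = (\<lambda>c. 1 * (Eb e c :: 'a::field))"
    and "hb p m n t (\<beta>,v,s) (\<alpha>,u,r) = (\<lambda>c. 1 * (Eb d c :: 'a))"
    and "(card u + tau m r) * (card v + tau m s) = 0"
    and "(Eb d :: widx \<Rightarrow> 'a) \<in> lie_gen p m n t S"
  shows "(Eb e :: widx \<Rightarrow> 'a) \<in> lie_gen p m n t S"
proof -
  have "wbracket p m n t (Eb (\<alpha>,u,r)) (Eb (\<beta>,v,s)) = (\<lambda>c. Eb e c - (Eb d c :: 'a))"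
    unfolding wbracket_Eb[OF assms(1,2)] bb_split assms(5,6,7) by simp
  then have "(\<lambda>c. Eb e c - Eb d c) \<in> lie_gen p m n t S"
    using lie_gen.gen_bracket[OF assms(3,4)] by simp
  from lie_gen.gen_add[OF this assms(8)] show ?thesis by simp
qed

definition ev :: "nat \<Rightarrow> nat \<Rightarrow> nat \<Rightarrow> nat" where
  "ev q i = (\<lambda>j. if j = i then q else 0)"

lemma ev_app[simp]: "ev q i j = (if j = i then q else 0)" by (simp add: ev_def)

lemma inWB: "((\<alpha>,u,r) \<in> WBasis p m n t) \<longleftrightarrow> (\<forall>i. i \<notin> Y0 m \<longrightarrow> \<alpha> i = 0) \<and> (\<forall>i\<in>Y0 m. \<alpha> i \<le> piw p t i) \<and> u \<subseteq> Y1 m n \<and> r \<in> Y m n"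
  by (auto simp: WBasis_def ABasis_def)

lemma inAB: "((\<alpha>,u) \<in> ABasis p m n t) \<longleftrightarrow> (\<forall>i. i \<notin> Y0 m \<longrightarrow> \<alpha> i = 0) \<and> (\<forall>i\<in>Y0 m. \<alpha> i \<le> piw p t i) \<and> u \<subseteq> Y1 m n"
  by (auto simp: ABasis_def)

lemma aD_amono: "aD (amono x) s = Eb (fst x, snd x, s)"
  by (cases x) (auto simp: aD_def amono_def Eb_def fun_eq_iff)

locale WG =
  fixes p m n :: nat and t :: "nat \<Rightarrow> nat"
  assumes pi3: "\<forall>i\<in>Y0 m. 3 \<le> piw p t i" and m2: "2 \<le> m"
begin

lemma pi_ge: "i \<in> Y0 m \<Longrightarrow> 3 \<le> piw p t i" using pi3 by blast

abbreviation GG :: "(widx \<Rightarrow> 'a::field) set" where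
  "GG \<equiv> Mset p m n t \<union> Nset p m n t \<union> Pset p m n t"

abbreviation LL :: "(widx \<Rightarrow> 'a::field) set" where
  "LL \<equiv> lie_gen p m n t GG"

lemma M_in: "i \<in> Y0 m \<Longrightarrow> j \<in> Y0 m \<Longrightarrow> q \<le> piw p t i \<Longrightarrow> Eb (ev q i, {}, j) \<in> LL"
proof -
  assume a: "i \<in> Y0 m" "j \<in> Y0 m" "q \<le> piw p t i"
  have "aD (dpow q i) j \<in> (Mset p m n t :: (widx \<Rightarrow> 'a) set)" unfolding Mset_def using a by blast
  moreover have "aD (dpow q i) j = (Eb (ev q i, {}, j) :: widx \<Rightarrow> 'a)"
    by (simp add: dpow_def aD_amono ev_def)
  ultimately show ?thesis by (auto intro: lie_gen.gen_base)
qed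

lemma Y0Y1: "i \<in> Y0 m \<Longrightarrow> i \<le> m" "k \<in> Y1 m n \<Longrightarrow> \<not> k \<le> m" "k \<in> Y1 m n \<Longrightarrow> k \<notin> Y0 m"
  by (auto simp: Y0_def Y1_def)

lemma N_in: "i \<in> Y0 m \<Longrightarrow> k \<in> Y1 m n \<Longrightarrow> l \<in> Y1 m n \<Longrightarrow> Eb (ev 1 i, {k}, l) \<in> LL"
proof -
  assume a: "i \<in> Y0 m" "k \<in> Y1 m n" "l \<in> Y1 m n"
  have "aD (amul p m n t (xgen m i) (xgen m k)) l \<in> (Nset p m n t :: (widx \<Rightarrow> 'a) set)" unfolding Nset_def using a by blast
  moreover have "aD (amul p m n t (xgen m i) (xgen m k)) l = (Eb (ev 1 i, {k}, l) :: widx \<Rightarrow> 'a)"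
  proof -
    have x1: "xgen m i = amono (ev 1 i, {})" using a by (simp add: xgen_def dpow_def Y0Y1 ev_def)
    have x2: "xgen m k = amono (\<lambda>j. 0, {k})" using a by (simp add: xgen_def Y0Y1)
    have b1: "(ev 1 i, {}) \<in> ABasis p m n t" using a pi_ge[of i] by (auto simp: inAB Y0Y1)
    have b2: "((\<lambda>j. 0), {k}) \<in> ABasis p m n t" using a by (auto simp: inAB)
    have e: "(\<lambda>j. ev 1 i j + 0) = ev 1 i" by auto
    show ?thesis unfolding x1 x2 amul_amono_amono[OF b1 b2]
      by (subst mono_mul_disj[OF b1 b2]) (auto simp: aD_single e ev_def)
  qed
  ultimately show ?thesis by (auto intro: lie_gen.gen_base)
qed

lemma P_in: "i \<in> Y0 m \<Longrightarrow> k \<in> Y1 m n \<Longrightarrow> l \<in> Y1 m n \<Longrightarrow> k \<noteq> l \<Longrightarrow> Eb (\<lambda>j. 0, {k,l}, i) \<in> LL"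
proof -
  assume a: "i \<in> Y0 m" "k \<in> Y1 m n" "l \<in> Y1 m n" "k \<noteq> l"
  have "aD (amul p m n t (xgen m k) (xgen m l)) i \<in> (Pset p m n t :: (widx \<Rightarrow> 'a) set)" unfolding Pset_def using a by blast
  moreover have "aD (amul p m n t (xgen m k) (xgen m l)) i = (\<lambda>c. gsign {k} {l} * (Eb (\<lambda>j. 0, {k,l}, i) c :: 'a))"
  proof -
    have x1: "xgen m k = amono (\<lambda>j. 0, {k})" using a by (simp add: xgen_def Y0Y1)
    have x2: "xgen m l = amono (\<lambda>j. 0, {l})" using a by (simp add: xgen_def Y0Y1)
    have b1: "((\<lambda>j. 0), {k}) \<in> ABasis p m n t" using a by (auto simp: inAB)
    have b2: "((\<lambda>j. 0), {l}) \<in> ABasis p m n t" using a by (auto simp: inAB)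
    show ?thesis unfolding x1 x2 amul_amono_amono[OF b1 b2]
      by (subst mono_mul_disj[OF b1 b2]) (use a in \<open>auto simp: aD_single insert_commute\<close>)
  qed
  ultimately have "(\<lambda>c. gsign {k} {l} * (Eb (\<lambda>j. 0, {k,l}, i) c :: 'a)) \<in> LL" by (auto intro: lie_gen.gen_base)
  from lie_gen_unsmult[OF this gsign_ne0] show ?thesis .
qed

lemma stepO2:
  assumes i: "i \<in> Y0 m" and r: "r \<in> Y m n" "r \<noteq> i" and B: "(\<beta>,u,r) \<in> WBasis p m n t"
    and bi: "\<beta> i = 1" and q: "q \<le> piw p t i" and L: "(Eb (\<beta>,u,r) :: widx \<Rightarrow> 'a::field) \<in> LL"
  shows "(Eb (\<beta>(i:=q),u,r) :: widx \<Rightarrow> 'a::field) \<in> LL"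
proof -
  have a: "(ev q i, {}, i) \<in> WBasis p m n t" using i q by (auto simp: inWB Y_def)
  have BA: "(\<beta>,u) \<in> ABasis p m n t" using B by (simp add: WBasis_def)
  have "hb p m n t (ev q i,{},i) (\<beta>,u,r) = (\<lambda>c. gsign {} u * (Eb ((\<lambda>k. ev q i k + (\<beta>(i := \<beta> i - 1)) k), {} \<union> u, r) c :: 'a))"
    by (rule hb_H) (use i q BA bi in \<open>auto simp: inAB\<close>)
  moreover have "(\<lambda>k. ev q i k + (\<beta>(i := \<beta> i - 1)) k) = \<beta>(i:=q)" using bi by auto
  ultimately have h1: "hb p m n t (ev q i,{},i) (\<beta>,u,r) = (\<lambda>c. 1 * (Eb (\<beta>(i:=q),u,r) c :: 'a))" by simp
  have h2: "hb p m n t (\<beta>,u,r) (ev q i,{},i) = (\<lambda>c. 0::'a)"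
    by (rule hb_zero) (use r i q in \<open>auto simp: inAB\<close>)
  show ?thesis by (rule gen_step1[OF a B M_in[OF i i q] L h1 h2]) simp
qed

lemma stepMul:
  assumes i: "i \<in> Y0 m" and r: "r \<in> Y0 m" "r \<noteq> i" and B: "(\<beta>,u,r) \<in> WBasis p m n t"
    and br: "\<beta> r = 1" and bi: "\<beta> i = 0" and L: "(Eb (\<beta>,u,r) :: widx \<Rightarrow> 'a::field) \<in> LL"
  shows "(Eb (\<beta>(r:=0,i:=1),u,r) :: widx \<Rightarrow> 'a::field) \<in> LL"
proof -
  have a: "(ev 1 i, {}, r) \<in> WBasis p m n t" using i r pi_ge[OF i] by (auto simp: inWB Y_def)
  have BA: "(\<beta>,u) \<in> ABasis p m n t" using B by (simp add: WBasis_def)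
  have "hb p m n t (ev 1 i,{},r) (\<beta>,u,r) = (\<lambda>c. gsign {} u * (Eb ((\<lambda>k. ev 1 i k + (\<beta>(r := \<beta> r - 1)) k), {} \<union> u, r) c :: 'a))"
    by (rule hb_H) (use i r pi_ge[OF i] BA br bi in \<open>auto simp: inAB\<close>)
  moreover have "(\<lambda>k. ev 1 i k + (\<beta>(r := \<beta> r - 1)) k) = \<beta>(r:=0,i:=1)" using bi br r by auto
  ultimately have h1: "hb p m n t (ev 1 i,{},r) (\<beta>,u,r) = (\<lambda>c. 1 * (Eb (\<beta>(r:=0,i:=1),u,r) c :: 'a))" by simp
  have h2: "hb p m n t (\<beta>,u,r) (ev 1 i,{},r) = (\<lambda>c. 0::'a)"
    by (rule hb_zero) (use r i pi_ge[OF i] in \<open>auto simp: inAB\<close>)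
  show ?thesis by (rule gen_step1[OF a B M_in[OF i r(1)] L h1 h2]) (use pi_ge[OF i] in simp_all)
qed

lemma stepO3:
  assumes r: "r \<in> Y0 m" and B: "(\<beta>,u,r) \<in> WBasis p m n t"
    and br: "\<beta> r = 0" and q: "1 \<le> q" "q \<le> piw p t r" and L: "(Eb (\<beta>,u,r) :: widx \<Rightarrow> 'a::field) \<in> LL"
  shows "(Eb (\<beta>(r:=q-1),u,r) :: widx \<Rightarrow> 'a::field) \<in> LL"
proof -
  have a: "(ev q r, {}, r) \<in> WBasis p m n t" using r q by (auto simp: inWB Y_def)
  have BA: "(\<beta>,u) \<in> ABasis p m n t" using B by (simp add: WBasis_def)
  have "hb p m n t (\<beta>,u,r) (ev q r,{},r) = (\<lambda>c. gsign u {} * (Eb ((\<lambda>k. \<beta> k + ((ev q r)(r := ev q r r - 1)) k), u \<union> {}, r) c :: 'a))"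
    by (rule hb_H) (use r q BA br in \<open>auto simp: inAB\<close>)
  moreover have "(\<lambda>k. \<beta> k + ((ev q r)(r := ev q r r - 1)) k) = \<beta>(r:=q-1)" using br by auto
  ultimately have h1: "hb p m n t (\<beta>,u,r) (ev q r,{},r) = (\<lambda>c. 1 * (Eb (\<beta>(r:=q-1),u,r) c :: 'a))" by simp
  have h2: "hb p m n t (ev q r,{},r) (\<beta>,u,r) = (\<lambda>c. 0::'a)"
    by (rule hb_zero) (use r br BA in \<open>auto simp: inAB\<close>)
  show ?thesis by (rule gen_step1[OF B a L M_in[OF r r q(2)] h1 h2]) simp
qed

lemma stepBase:
  assumes j: "j \<in> Y0 m" and r: "r \<in> Y0 m" "r \<noteq> j" and kl: "k \<in> Y1 m n" "l \<in> Y1 m n" "k \<noteq> l"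
    and u: "k \<notin> u" "l \<notin> u" "u \<subseteq> Y1 m n" and L: "(Eb (ev 1 j,u,r) :: widx \<Rightarrow> 'a::field) \<in> LL"
  shows "(Eb ((\<lambda>i. 0),insert k (insert l u),r) :: widx \<Rightarrow> 'a::field) \<in> LL"
proof -
  have a: "((\<lambda>i. 0), {k,l}, j) \<in> WBasis p m n t" using j kl by (auto simp: inWB Y_def)
  have B: "(ev 1 j,u,r) \<in> WBasis p m n t" using j r u pi_ge[OF j] by (auto simp: inWB Y_def)
  have "hb p m n t ((\<lambda>i. 0),{k,l},j) (ev 1 j,u,r) = (\<lambda>c. gsign {k,l} u * (Eb ((\<lambda>i. (\<lambda>i. 0) i + ((ev 1 j)(j := ev 1 j j - 1)) i), {k,l} \<union> u, r) c :: 'a))"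
    by (rule hb_H) (use j kl u pi_ge[OF j] in \<open>auto simp: inAB\<close>)
  moreover have "(\<lambda>i. (\<lambda>i. 0) i + ((ev 1 j)(j := ev 1 j j - 1)) i) = (\<lambda>i. 0)" by auto
  ultimately have h1: "hb p m n t ((\<lambda>i. 0),{k,l},j) (ev 1 j,u,r) = (\<lambda>c. gsign {k,l} u * (Eb ((\<lambda>i. 0),insert k (insert l u),r) c :: 'a))" by simp
  have h2: "hb p m n t (ev 1 j,u,r) ((\<lambda>i. 0),{k,l},j) = (\<lambda>c. 0::'a)"
    by (rule hb_zero) (use r j kl in \<open>auto simp: inAB\<close>)
  show ?thesis by (rule gen_step1[OF a B P_in[OF j kl] L h1 h2 gsign_ne0])
qed

lemma stepC2:
  assumes j: "j \<in> Y0 m" and r: "r \<in> Y0 m" "r \<noteq> j" and B: "(\<alpha>,u,r) \<in> WBasis p m n t"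
    and ar: "\<alpha> r = piw p t r" and aj: "\<alpha> j = 1"
    and L1: "(Eb (\<alpha>(r:=0,j:=2),u,r) :: widx \<Rightarrow> 'a::field) \<in> LL" and L2: "(Eb (\<alpha>(j:=2,r:=piw p t r - 1),u,j) :: widx \<Rightarrow> 'a::field) \<in> LL"
  shows "(Eb (\<alpha>,u,r) :: widx \<Rightarrow> 'a::field) \<in> LL"
proof -
  have a: "(ev (piw p t r) r, {}, j) \<in> WBasis p m n t" using j r by (auto simp: inWB Y_def)
  have b: "(\<alpha>(r:=0,j:=2),u,r) \<in> WBasis p m n t" using B j r pi_ge[OF j] by (auto simp: inWB)
  have BA: "(\<alpha>(r:=0,j:=2),u) \<in> ABasis p m n t" using b by (simp add: WBasis_def)
  have aA: "(ev (piw p t r) r, {}) \<in> ABasis p m n t" using a by (simp add: WBasis_def)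
  have "hb p m n t (ev (piw p t r) r,{},j) (\<alpha>(r:=0,j:=2),u,r) = (\<lambda>c. gsign {} u * (Eb ((\<lambda>k. ev (piw p t r) r k + ((\<alpha>(r:=0,j:=2))(j := (\<alpha>(r:=0,j:=2)) j - 1)) k), {} \<union> u, r) c :: 'a))"
    by (rule hb_H) (use j r aA BA in \<open>auto\<close>)
  moreover have "(\<lambda>k. ev (piw p t r) r k + ((\<alpha>(r:=0,j:=2))(j := (\<alpha>(r:=0,j:=2)) j - 1)) k) = \<alpha>" using ar aj r by auto
  ultimately have h1: "hb p m n t (ev (piw p t r) r,{},j) (\<alpha>(r:=0,j:=2),u,r) = (\<lambda>c. 1 * (Eb (\<alpha>,u,r) c :: 'a))" by simp
  have "hb p m n t (\<alpha>(r:=0,j:=2),u,r) (ev (piw p t r) r,{},j) = (\<lambda>c. gsign u {} * (Eb ((\<lambda>k. (\<alpha>(r:=0,j:=2)) k + ((ev (piw p t r) r)(r := ev (piw p t r) r r - 1)) k), u \<union> {}, j) c :: 'a))"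
    by (rule hb_H) (use j r aA BA pi_ge[OF r(1)] in \<open>auto\<close>)
  moreover have "(\<lambda>k. (\<alpha>(r:=0,j:=2)) k + ((ev (piw p t r) r)(r := ev (piw p t r) r r - 1)) k) = \<alpha>(j:=2,r:=piw p t r - 1)" using r by auto
  ultimately have h2: "hb p m n t (\<alpha>(r:=0,j:=2),u,r) (ev (piw p t r) r,{},j) = (\<lambda>c. 1 * (Eb (\<alpha>(j:=2,r:=piw p t r - 1),u,j) c :: 'a))" by simp
  show ?thesis by (rule gen_step2[OF a b M_in[OF r(1) j] L1 h1 h2 _ L2]) (use j in \<open>simp_all add: tau_def Y0Y1\<close>)
qed

lemma stepB:
  assumes j: "j \<in> Y0 m" and kl: "k \<in> Y1 m n" "l \<in> Y1 m n"
    and u: "k \<notin> u" "l \<notin> u" and B: "(\<beta>,u,j) \<in> WBasis p m n t" and L: "(Eb (\<beta>,u,j) :: widx \<Rightarrow> 'a::field) \<in> LL"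
  shows "(Eb (\<beta>,insert k u,l) :: widx \<Rightarrow> 'a::field) \<in> LL"
proof -
  have b: "(ev 1 j, {k}, l) \<in> WBasis p m n t" using j kl pi_ge[OF j] by (auto simp: inWB Y_def)
  have BA: "(\<beta>,u) \<in> ABasis p m n t" using B by (simp add: WBasis_def)
  have "hb p m n t (\<beta>,u,j) (ev 1 j,{k},l) = (\<lambda>c. gsign u {k} * (Eb ((\<lambda>i. \<beta> i + ((ev 1 j)(j := ev 1 j j - 1)) i), u \<union> {k}, l) c :: 'a))"
    by (rule hb_H) (use j kl u pi_ge[OF j] BA in \<open>auto simp: inAB\<close>)
  moreover have "(\<lambda>i. \<beta> i + ((ev 1 j)(j := ev 1 j j - 1)) i) = \<beta>" by auto
  ultimately have h1: "hb p m n t (\<beta>,u,j) (ev 1 j,{k},l) = (\<lambda>c. gsign u {k} * (Eb (\<beta>,insert k u,l) c :: 'a))" by simp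
  have h2: "hb p m n t (ev 1 j,{k},l) (\<beta>,u,j) = (\<lambda>c. 0::'a)"
    by (rule hb_zero) (use kl u BA in \<open>auto simp: Y0Y1\<close>)
  show ?thesis by (rule gen_step1[OF B b L N_in[OF j kl] h1 h2 gsign_ne0])
qed

lemma O3full:
  assumes r: "r \<in> Y0 m" and B: "(\<alpha>,u,r) \<in> WBasis p m n t" and lt: "\<alpha> r < piw p t r"
    and L: "(Eb (\<alpha>(r:=0),u,r) :: widx \<Rightarrow> 'a::field) \<in> LL"
  shows "(Eb (\<alpha>,u,r) :: widx \<Rightarrow> 'a::field) \<in> LL"
proof (cases "\<alpha> r = 0")
  case True
  then have "\<alpha>(r:=0) = \<alpha>" by auto
  then show ?thesis using L by simp
next
  case False
  have B0: "(\<alpha>(r:=0),u,r) \<in> WBasis p m n t" using B by (auto simp: inWB)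
  have "(Eb (\<alpha>(r:=0,r:=\<alpha> r + 1 - 1),u,r) :: widx \<Rightarrow> 'a::field) \<in> LL"
    by (rule stepO3[OF r B0 _ _ _ L]) (use lt in auto)
  then show ?thesis by simp
qed

lemma Ssub: "{i \<in> Y0 m. i \<noteq> r \<and> \<alpha> i \<noteq> 0} \<subseteq> Y0 m" by auto
lemma finY0: "finite (Y0 m)" by (simp add: Y0_def)

lemma A_lt_aux:
  assumes r: "r \<in> Y0 m" and base: "(Eb ((\<lambda>i. 0),u,r) :: widx \<Rightarrow> 'a::field) \<in> LL"
  shows "\<forall>\<alpha>. (\<alpha>,u,r) \<in> WBasis p m n t \<longrightarrow> \<alpha> r < piw p t r \<longrightarrow> card {i \<in> Y0 m. i \<noteq> r \<and> \<alpha> i \<noteq> 0} = N \<longrightarrow> (Eb (\<alpha>,u,r) :: widx \<Rightarrow> 'a::field) \<in> LL"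
proof (induction N)
  case 0
  show ?case
  proof (intro allI impI)
    fix \<alpha> assume B: "(\<alpha>,u,r) \<in> WBasis p m n t" and lt: "\<alpha> r < piw p t r" and c: "card {i \<in> Y0 m. i \<noteq> r \<and> \<alpha> i \<noteq> 0} = 0"
    have fS: "finite {i \<in> Y0 m. i \<noteq> r \<and> \<alpha> i \<noteq> 0}" using finite_subset[OF Ssub[of r \<alpha>] finY0] .
    have e: "{i \<in> Y0 m. i \<noteq> r \<and> \<alpha> i \<noteq> 0} = {}" using c fS by (simp only: card_eq_0_iff simp_thms)
    have z1: "\<forall>i\<in>Y0 m. i \<noteq> r \<longrightarrow> \<alpha> i = 0"
    proof (intro ballI impI)
      fix i assume i: "i \<in> Y0 m" "i \<noteq> r"
      show "\<alpha> i = 0"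
      proof (rule ccontr)
        assume "\<alpha> i \<noteq> 0"
        then have "i \<in> {i \<in> Y0 m. i \<noteq> r \<and> \<alpha> i \<noteq> 0}" using i by simp
        then show False unfolding e by simp
      qed
    qed
    have z2: "\<forall>i. i \<notin> Y0 m \<longrightarrow> \<alpha> i = 0" using B by (simp add: inWB)
    have "\<alpha>(r:=0) = (\<lambda>i. 0)"
    proof
      fix i show "(\<alpha>(r:=0)) i = 0" using z1 z2 by (cases "i \<in> Y0 m") auto
    qed
    then have "(Eb (\<alpha>(r:=0),u,r) :: widx \<Rightarrow> 'a::field) \<in> LL" using base by simp
    then show "(Eb (\<alpha>,u,r) :: widx \<Rightarrow> 'a::field) \<in> LL" by (rule O3full[OF r B lt])
  qed
next
  case (Suc N)
  show ?case
  proof (intro allI impI)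
    fix \<alpha> assume B: "(\<alpha>,u,r) \<in> WBasis p m n t" and lt: "\<alpha> r < piw p t r" and c: "card {i \<in> Y0 m. i \<noteq> r \<and> \<alpha> i \<noteq> 0} = Suc N"
    have ne: "{i \<in> Y0 m. i \<noteq> r \<and> \<alpha> i \<noteq> 0} \<noteq> {}" using c by (metis card.empty nat.distinct(1))
    then obtain i where i: "i \<in> {i \<in> Y0 m. i \<noteq> r \<and> \<alpha> i \<noteq> 0}" by blast
    have iY: "i \<in> Y0 m" "i \<noteq> r" "\<alpha> i \<noteq> 0" using i by auto
    define \<beta> where "\<beta> = \<alpha>(i:=0, r:=1)"
    have Sb: "{k \<in> Y0 m. k \<noteq> r \<and> \<beta> k \<noteq> 0} = {k \<in> Y0 m. k \<noteq> r \<and> \<alpha> k \<noteq> 0} - {i}"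
      unfolding \<beta>_def by auto
    have fS: "finite {k \<in> Y0 m. k \<noteq> r \<and> \<alpha> k \<noteq> 0}" using finite_subset[OF Ssub[of r \<alpha>] finY0] .
    have cb: "card {k \<in> Y0 m. k \<noteq> r \<and> \<beta> k \<noteq> 0} = N"
      unfolding Sb using c i fS by (simp add: card_Diff_singleton)
    have Bb: "(\<beta>,u,r) \<in> WBasis p m n t" using B r pi_ge[OF r] unfolding \<beta>_def inWB by auto
    have br: "\<beta> r < piw p t r" using pi_ge[OF r] unfolding \<beta>_def by simp
    have Lb: "(Eb (\<beta>,u,r) :: widx \<Rightarrow> 'a::field) \<in> LL" using Suc.IH Bb br cb by blast
    have b1: "\<beta> r = 1" "\<beta> i = 0" unfolding \<beta>_def using iY by auto
    have L1: "(Eb (\<beta>(r:=0,i:=1),u,r) :: widx \<Rightarrow> 'a::field) \<in> LL"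
      by (rule stepMul[OF iY(1) r iY(2)[symmetric] Bb b1 Lb])
    have e1: "\<beta>(r:=0,i:=1) = \<alpha>(r:=0,i:=1)" unfolding \<beta>_def using iY by (auto simp: fun_eq_iff)
    have B1: "(\<alpha>(r:=0,i:=1),u,r) \<in> WBasis p m n t" using B pi_ge[OF iY(1)] iY(1) unfolding inWB by auto
    have rY: "r \<in> Y m n" using r by (simp add: Y_def)
    have aib: "\<alpha> i \<le> piw p t i" using B iY(1) unfolding inWB by auto
    have L1': "(Eb (\<alpha>(r:=0,i:=1),u,r) :: widx \<Rightarrow> 'a::field) \<in> LL" using L1 unfolding e1 .
    have "(Eb (\<alpha>(r:=0,i:=1,i:=\<alpha> i),u,r) :: widx \<Rightarrow> 'a::field) \<in> LL"
      by (rule stepO2[OF iY(1) rY iY(2)[symmetric] B1 _ aib L1']) simp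
    moreover have eq: "\<alpha>(r:=0,i:=1,i:=\<alpha> i) = \<alpha>(r:=0)" using iY by (auto simp: fun_eq_iff)
    ultimately have "(Eb (\<alpha>(r:=0),u,r) :: widx \<Rightarrow> 'a::field) \<in> LL" by metis
    then show "(Eb (\<alpha>,u,r) :: widx \<Rightarrow> 'a::field) \<in> LL" by (rule O3full[OF r B lt])
  qed
qed

lemma A_lt:
  assumes r: "r \<in> Y0 m" and base: "(Eb ((\<lambda>i. 0),u,r) :: widx \<Rightarrow> 'a::field) \<in> LL"
    and B: "(\<alpha>,u,r) \<in> WBasis p m n t" and lt: "\<alpha> r < piw p t r"
  shows "(Eb (\<alpha>,u,r) :: widx \<Rightarrow> 'a::field) \<in> LL"
  using A_lt_aux[OF r base] B lt by blast

lemma other: "r \<in> Y0 m \<Longrightarrow> \<exists>j. j \<in> Y0 m \<and> j \<noteq> r"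
proof -
  assume r: "r \<in> Y0 m"
  show ?thesis
  proof (cases "r = 1")
    case True then show ?thesis using m2 by (intro exI[of _ 2]) (auto simp: Y0_def)
  next
    case False then show ?thesis using m2 by (intro exI[of _ 1]) (auto simp: Y0_def)
  qed
qed

lemma A_base:
  assumes "even (card u)" "u \<subseteq> Y1 m n" "r \<in> Y0 m"
  shows "(Eb ((\<lambda>i. 0),u,r) :: widx \<Rightarrow> 'a::field) \<in> LL"
  using assms
proof (induction "card u" arbitrary: u r rule: less_induct)
  case less
  show ?case
  proof (cases "u = {}")
    case True
    have "ev 0 r = (\<lambda>i. 0)" by (simp add: fun_eq_iff)
    then show ?thesis using M_in[OF less(4) less(4), of 0] True by simp
  next
    case False
    have fu: "finite u" using less(3) finite_subset by (auto simp: Y1_def)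
    obtain k where k: "k \<in> u" using False by blast
    have cu0: "card u \<noteq> 0" using fu False by simp
    have c2: "2 \<le> card u" using less(2) cu0 by presburger
    have ck: "card (u - {k}) = card u - 1" using k fu by (simp add: card_Diff_singleton)
    then have "card (u - {k}) \<noteq> 0" using c2 by simp
    then have "u - {k} \<noteq> {}" by (metis card.empty)
    then obtain l where l: "l \<in> u - {k}" by blast
    define u' where "u' = u - {k} - {l}"
    have cl: "card u' = card (u - {k}) - 1" unfolding u'_def using l fu by (simp add: card_Diff_singleton)
    have cu: "card u = Suc (Suc (card u'))" using cl ck c2 by simp
    have ev': "even (card u')" using less(2) cu by simp
    have u'Y: "u' \<subseteq> Y1 m n" using less(3) unfolding u'_def by auto
    obtain j where j: "j \<in> Y0 m" "j \<noteq> r" using other[OF less(4)] by blast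
    have lt': "card u' < card u" using cu by simp
    have base': "(Eb ((\<lambda>i. 0),u',r) :: widx \<Rightarrow> 'a::field) \<in> LL" using less(1)[OF lt' ev' u'Y less(4)] .
    have Bj: "(ev 1 j,u',r) \<in> WBasis p m n t" unfolding inWB using j less(4) u'Y pi_ge[OF j(1)] by (auto simp: Y_def)
    have ltj: "ev 1 j r < piw p t r" using j pi_ge[OF less(4)] by simp
    have Lj: "(Eb (ev 1 j,u',r) :: widx \<Rightarrow> 'a::field) \<in> LL"
      by (rule A_lt[OF less(4) base' Bj ltj])
    have kY: "k \<in> Y1 m n" "l \<in> Y1 m n" "k \<noteq> l" "k \<notin> u'" "l \<notin> u'" using k l less(3) unfolding u'_def by auto
    have "(Eb ((\<lambda>i. 0),insert k (insert l u'),r) :: widx \<Rightarrow> 'a::field) \<in> LL"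
      by (rule stepBase[OF j(1) less(4) j(2)[symmetric] kY u'Y Lj])
    moreover have "insert k (insert l u') = u" using k l unfolding u'_def by auto
    ultimately show ?thesis by simp
  qed
qed

lemma A_all:
  assumes u: "even (card u)" "u \<subseteq> Y1 m n" and r: "r \<in> Y0 m" and B: "(\<alpha>,u,r) \<in> WBasis p m n t"
  shows "(Eb (\<alpha>,u,r) :: widx \<Rightarrow> 'a::field) \<in> LL"
proof (cases "\<alpha> r < piw p t r")
  case True
  then show ?thesis using A_lt[OF r A_base[OF u r] B] by simp
next
  case False
  then have ar: "\<alpha> r = piw p t r" using B r by (auto simp: inWB)
  obtain j where j: "j \<in> Y0 m" "j \<noteq> r" using other[OF r] by blast
  define \<alpha>' where "\<alpha>' = \<alpha>(j:=1)"
  have B': "(\<alpha>',u,r) \<in> WBasis p m n t" using B j pi_ge[OF j(1)] unfolding \<alpha>'_def by (auto simp: inWB)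
  have L1: "(Eb (\<alpha>'(r:=0,j:=2),u,r) :: widx \<Rightarrow> 'a::field) \<in> LL"
    by (rule A_lt[OF r A_base[OF u r]]) (use B j r pi_ge[OF j(1)] pi_ge[OF r] in \<open>auto simp: inWB \<alpha>'_def\<close>)
  have L2: "(Eb (\<alpha>'(j:=2,r:=piw p t r - 1),u,j) :: widx \<Rightarrow> 'a::field) \<in> LL"
    by (rule A_lt[OF j(1) A_base[OF u j(1)]]) (use B j r pi_ge[OF j(1)] pi_ge[OF r] in \<open>auto simp: inWB \<alpha>'_def Y_def\<close>)
  have L3: "(Eb (\<alpha>',u,r) :: widx \<Rightarrow> 'a::field) \<in> LL"
    by (rule stepC2[OF j(1) r j(2)[symmetric] B' _ _ L1 L2]) (use ar j in \<open>auto simp: \<alpha>'_def\<close>)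
  have "(Eb (\<alpha>'(j:=\<alpha> j),u,r) :: widx \<Rightarrow> 'a::field) \<in> LL"
    by (rule stepO2[OF j(1) _ _ B' _ _ L3]) (use B j r in \<open>auto simp: \<alpha>'_def inWB Y_def\<close>)
  then show ?thesis unfolding \<alpha>'_def by simp
qed

lemma B_all:
  assumes u: "odd (card u)" "u \<subseteq> Y1 m n" and l: "l \<in> Y1 m n" and B: "(\<beta>,u,l) \<in> WBasis p m n t"
  shows "(Eb (\<beta>,u,l) :: widx \<Rightarrow> 'a::field) \<in> LL"
proof -
  have fu: "finite u" using u(2) finite_subset by (auto simp: Y1_def)
  have ne: "u \<noteq> {}" using u(1) by auto
  define k where "k = (if l \<in> u then l else (SOME k. k \<in> u))"
  have k: "k \<in> u" unfolding k_def using ne by (auto intro: someI_ex)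
  define u' where "u' = u - {k}"
  have lu': "l \<notin> u'" unfolding u'_def k_def by auto
  have ev': "even (card u')" unfolding u'_def using u(1) k fu by (simp add: card_Diff_singleton)
  have u'Y: "u' \<subseteq> Y1 m n" using u(2) unfolding u'_def by auto
  have j: "1 \<in> Y0 m" using m2 by (simp add: Y0_def)
  have B': "(\<beta>,u',1) \<in> WBasis p m n t" using B u'Y j by (auto simp: inWB Y_def u'_def)
  have "(Eb (\<beta>,insert k u',l) :: widx \<Rightarrow> 'a::field) \<in> LL"
    by (rule stepB[OF j _ l _ lu' B' A_all[OF ev' u'Y j B']]) (use k u(2) u'_def in auto)
  moreover have "insert k u' = u" using k unfolding u'_def by auto
  ultimately show ?thesis by simp
qed

lemma even_all:
  assumes B: "(\<alpha>,u,r) \<in> WBasis p m n t" and e: "even (card u + tau m r)"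
  shows "(Eb (\<alpha>,u,r) :: widx \<Rightarrow> 'a::field) \<in> LL"
proof -
  have uY: "u \<subseteq> Y1 m n" and rY: "r \<in> Y m n" using B by (auto simp: inWB)
  show ?thesis
  proof (cases "r \<le> m")
    case True
    then have "r \<in> Y0 m" using rY by (auto simp: Y_def Y0_def Y1_def)
    then show ?thesis using A_all[OF _ uY _ B] e True by (simp add: tau_def)
  next
    case False
    then have "r \<in> Y1 m n" using rY by (auto simp: Y_def Y0_def Y1_def)
    then show ?thesis using B_all[OF _ uY _ B] e False by (simp add: tau_def)
  qed
qed

end

lemma hb_support:
  assumes A: "(\<alpha>,u) \<in> ABasis p m n t" and B: "(\<beta>,v) \<in> ABasis p m n t"
    and r: "r \<in> Y m n" and s: "s \<in> Y m n"
    and nz: "hb p m n t (\<alpha>,u,r) (\<beta>,v,s) c \<noteq> (0::'a::field)"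
  shows "\<exists>\<gamma> w. c = (\<gamma>,w,s) \<and> (\<gamma>,w,s) \<in> WBasis p m n t \<and> card w + tau m r = card u + card v"
proof -
  obtain \<gamma> w s' where c: "c = (\<gamma>,w,s')" by (metis prod_cases3)
  have hbe: "hb p m n t (\<alpha>,u,r) (\<beta>,v,s) c = (aD (amul p m n t (amono (\<alpha>,u)) (deriv_mono m r (\<beta>,v))) s c :: 'a)"
    unfolding hb_def by (simp add: aderiv_amono[OF B])
  have ss: "s' = s" and nz2: "amul p m n t (amono (\<alpha>,u)) (deriv_mono m r (\<beta>,v)) (\<gamma>,w) \<noteq> (0::'a)"
    using nz unfolding hbe unfolding c aD_def by (auto split: if_splits)
  have "(\<Sum>b\<in>ABasis p m n t. deriv_mono m r (\<beta>,v) b * mono_mul p m t (\<alpha>,u) b (\<gamma>,w)) \<noteq> (0::'a)"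
    using nz2 unfolding amul_amono[OF A] .
  then obtain b where bA: "b \<in> ABasis p m n t" and bnz: "deriv_mono m r (\<beta>,v) b * mono_mul p m t (\<alpha>,u) b (\<gamma>,w) \<noteq> (0::'a)"
    by (rule sum.not_neutral_contains_not_neutral)
  obtain \<beta>' v' where b: "b = (\<beta>',v')" by force
  have d: "deriv_mono m r (\<beta>,v) (\<beta>',v') \<noteq> (0::'a)" and mm: "mono_mul p m t (\<alpha>,u) (\<beta>',v') (\<gamma>,w) \<noteq> (0::'a)"
    using bnz b by auto
  have mm2: "(\<forall>i\<in>Y0 m. \<alpha> i + \<beta>' i \<le> piw p t i) \<and> \<gamma> = (\<lambda>i. \<alpha> i + \<beta>' i) \<and> u \<inter> v' = {} \<and> w = u \<union> v'"
    using mm unfolding mono_mul_def by (auto split: if_splits)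
  have d2: "(r \<in> Y0 m \<and> v' = v) \<or> (r \<notin> Y0 m \<and> r \<in> v \<and> v' = v - {r})"
    using d unfolding deriv_mono_def by (auto split: if_splits)
  have fY1: "finite (Y1 m n)" by (simp add: Y1_def)
  have uY: "u \<subseteq> Y1 m n" using A by (simp add: inAB)
  have vY: "v \<subseteq> Y1 m n" using B by (simp add: inAB)
  have v'Y: "v' \<subseteq> Y1 m n" using bA b by (simp add: inAB)
  have fu: "finite u" using uY fY1 finite_subset by blast
  have fv: "finite v" using vY fY1 finite_subset by blast
  have fv': "finite v'" using v'Y fY1 finite_subset by blast
  have cw: "card w = card u + card v'" using mm2 fu fv' by (simp add: card_Un_disjoint)
  have cv: "card v' + tau m r = card v"
  proof (cases "r \<in> Y0 m")
    case True
    then show ?thesis using d2 by (simp add: tau_def Y0_def)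
  next
    case False
    then have "r \<notin> Y0 m" "r \<in> v" "v' = v - {r}" using d2 by auto
    moreover have "\<not> r \<le> m" using False r by (auto simp: Y_def Y0_def Y1_def)
    ultimately show ?thesis using fv by (simp add: tau_def card_Diff_singleton) (metis card_0_eq empty_iff not_gr0 Suc_pred)
  qed
  have WB: "(\<gamma>,w,s) \<in> WBasis p m n t"
    unfolding inWB using mm2 A bA b uY v'Y s by (auto simp: inAB)
  show ?thesis using c ss WB cw cv by auto
qed

definition par :: "nat \<Rightarrow> widx \<Rightarrow> bool" where
  "par m c = (case c of (\<alpha>,u,r) \<Rightarrow> even (card u + tau m r))"

lemma bb_support:
  assumes a: "a \<in> WBasis p m n t" and b: "b \<in> WBasis p m n t" and pa: "par m a" and pb: "par m b"
    and nz: "bracket_basis p m n t a b c \<noteq> (0::'a::field)"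
  shows "c \<in> WBasis p m n t \<and> par m c"
proof -
  obtain \<alpha> u r where ae: "a = (\<alpha>,u,r)" by (metis prod_cases3)
  obtain \<beta> v s where be: "b = (\<beta>,v,s)" by (metis prod_cases3)
  have A: "(\<alpha>,u) \<in> ABasis p m n t" "r \<in> Y m n" using a ae by (auto simp: WBasis_def)
  have B: "(\<beta>,v) \<in> ABasis p m n t" "s \<in> Y m n" using b be by (auto simp: WBasis_def)
  have eu: "even (card u + tau m r)" using pa ae by (simp add: par_def)
  have ev: "even (card v + tau m s)" using pb be by (simp add: par_def)
  have "hb p m n t (\<alpha>,u,r) (\<beta>,v,s) c \<noteq> (0::'a) \<or> hb p m n t (\<beta>,v,s) (\<alpha>,u,r) c \<noteq> (0::'a)"
    using nz unfolding ae be bb_split by auto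
  then show ?thesis
  proof
    assume h: "hb p m n t (\<alpha>,u,r) (\<beta>,v,s) c \<noteq> (0::'a)"
    obtain \<gamma> w where "c = (\<gamma>,w,s)" "(\<gamma>,w,s) \<in> WBasis p m n t" "card w + tau m r = card u + card v"
      using hb_support[OF A(1) B(1) A(2) B(2) h] by blast
    moreover have "even (card w + tau m s)" using calculation(3) eu ev by presburger
    ultimately show ?thesis by (simp add: par_def)
  next
    assume h: "hb p m n t (\<beta>,v,s) (\<alpha>,u,r) c \<noteq> (0::'a)"
    obtain \<gamma> w where "c = (\<gamma>,w,r)" "(\<gamma>,w,r) \<in> WBasis p m n t" "card w + tau m s = card v + card u"
      using hb_support[OF B(1) A(1) B(2) A(2) h] by blast
    moreover have "even (card w + tau m r)" using calculation(3) eu ev by presburger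
    ultimately show ?thesis by (simp add: par_def)
  qed
qed

lemma Weven_iff: "X \<in> Weven p m n t \<longleftrightarrow> (\<forall>c. X c \<noteq> 0 \<longrightarrow> c \<in> WBasis p m n t \<and> par m c)"
  unfolding Weven_def Wsp_def par_def by (auto split: prod.splits)

lemma WevenD: "X \<in> Weven p m n t \<Longrightarrow> X c \<noteq> 0 \<Longrightarrow> c \<in> WBasis p m n t \<and> par m c"
  unfolding Weven_iff by blast

lemma Weven_bracket:
  assumes X: "X \<in> Weven p m n t" and Z: "Z \<in> Weven p m n t"
  shows "wbracket p m n t X Z \<in> Weven p m n t"
  unfolding Weven_iff
proof (intro allI impI)
  fix c assume "wbracket p m n t X Z c \<noteq> 0"
  then obtain a where a: "a \<in> WBasis p m n t" and sa:
    "(\<Sum>b\<in>WBasis p m n t. X a * Z b * bracket_basis p m n t a b c) \<noteq> 0"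
    unfolding wbracket_def by (rule sum.not_neutral_contains_not_neutral)
  from sa obtain b where b: "b \<in> WBasis p m n t" and nz: "X a * Z b * bracket_basis p m n t a b c \<noteq> 0"
    by (rule sum.not_neutral_contains_not_neutral)
  have "X a \<noteq> 0" "Z b \<noteq> 0" "bracket_basis p m n t a b c \<noteq> (0::'a)" using nz by auto
  then have "par m a" "par m b" using WevenD[OF X] WevenD[OF Z] by auto
  then show "c \<in> WBasis p m n t \<and> par m c"
    using bb_support[OF a b _ _ \<open>bracket_basis p m n t a b c \<noteq> (0::'a)\<close>] by blast
qed

lemma lie_gen_Weven:
  assumes S: "S \<subseteq> Weven p m n t" and X: "X \<in> lie_gen p m n t S"
  shows "X \<in> Weven p m n t"
  using X
proof induction
  case (gen_base X) then show ?case using S by blast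
next
  case gen_zero then show ?case by (simp add: Weven_iff)
next
  case (gen_add X Z) then show ?case unfolding Weven_iff by (metis add.right_neutral add_0)
next
  case (gen_smult X k) then show ?case unfolding Weven_iff by auto
next
  case (gen_bracket X Z) then show ?case using Weven_bracket by blast
qed

lemma Eb_Weven: "a \<in> WBasis p m n t \<Longrightarrow> par m a \<Longrightarrow> (\<lambda>c. k * Eb a c) \<in> Weven p m n t"
  unfolding Weven_iff Eb_def by auto

context WG
begin

lemma G_Weven: "(GG :: (widx \<Rightarrow> 'a::field) set) \<subseteq> Weven p m n t"
proof
  fix X :: "widx \<Rightarrow> 'a" assume "X \<in> GG"
  then consider "X \<in> Mset p m n t" | "X \<in> Nset p m n t" | "X \<in> Pset p m n t" by blast
  then show "X \<in> Weven p m n t"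
  proof cases
    case 1
    then obtain q i j where X: "X = aD (dpow q i) j" and c: "i \<in> Y0 m" "j \<in> Y0 m" "q \<le> piw p t i"
      unfolding Mset_def by blast
    have "X = (\<lambda>c. 1 * Eb (ev q i, {}, j) c)" unfolding X by (simp add: dpow_def aD_amono ev_def)
    moreover have "(ev q i, {}, j) \<in> WBasis p m n t" using c by (auto simp: inWB Y_def)
    moreover have "par m (ev q i, {}, j)" using c by (simp add: par_def tau_def Y0Y1)
    ultimately show ?thesis using Eb_Weven by metis
  next
    case 2
    then obtain i k l where X: "X = aD (amul p m n t (xgen m i) (xgen m k)) l" and a: "i \<in> Y0 m" "k \<in> Y1 m n" "l \<in> Y1 m n"
      unfolding Nset_def by blast
    have x1: "xgen m i = amono (ev 1 i, {})" using a by (simp add: xgen_def dpow_def Y0Y1 ev_def)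
    have x2: "xgen m k = amono (\<lambda>j. 0, {k})" using a by (simp add: xgen_def Y0Y1)
    have b1: "(ev 1 i, {}) \<in> ABasis p m n t" using a pi_ge[of i] by (auto simp: inAB Y0Y1)
    have b2: "((\<lambda>j. 0), {k}) \<in> ABasis p m n t" using a by (auto simp: inAB)
    have e: "(\<lambda>j. ev 1 i j + 0) = ev 1 i" by auto
    have Xe: "X = (\<lambda>c. 1 * Eb (ev 1 i, {k}, l) c)" unfolding X x1 x2 amul_amono_amono[OF b1 b2]
      by (subst mono_mul_disj[OF b1 b2]) (auto simp: aD_single e ev_def)
    have "(ev 1 i, {k}, l) \<in> WBasis p m n t" using a pi_ge[of i] by (auto simp: inWB Y_def Y0Y1)
    moreover have "par m (ev 1 i, {k}, l)" using a by (simp add: par_def tau_def Y0Y1)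
    ultimately show ?thesis unfolding Xe by (rule Eb_Weven)
  next
    case 3
    then obtain i k l where X: "X = aD (amul p m n t (xgen m k) (xgen m l)) i" and a: "i \<in> Y0 m" "k \<in> Y1 m n" "l \<in> Y1 m n"
      unfolding Pset_def by blast
    have x1: "xgen m k = amono (\<lambda>j. 0, {k})" using a by (simp add: xgen_def Y0Y1)
    have x2: "xgen m l = amono (\<lambda>j. 0, {l})" using a by (simp add: xgen_def Y0Y1)
    have b1: "((\<lambda>j. 0), {k}) \<in> ABasis p m n t" using a by (auto simp: inAB)
    have b2: "((\<lambda>j. 0), {l}) \<in> ABasis p m n t" using a by (auto simp: inAB)
    have Xm: "X = aD (mono_mul p m t ((\<lambda>j. 0), {k}) ((\<lambda>j. 0), {l})) i" unfolding X x1 x2 amul_amono_amono[OF b1 b2] ..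
    show ?thesis
    proof (cases "k = l")
      case True
      have "X = (\<lambda>c. 0)" unfolding Xm True by (auto simp: fun_eq_iff aD_def mono_mul_def split: prod.splits)
      then show ?thesis by (simp add: Weven_iff)
    next
      case False
      have Xe: "X = (\<lambda>c. gsign {k} {l} * Eb ((\<lambda>j. 0), {k,l}, i) c)"
        unfolding Xm by (subst mono_mul_disj[OF b1 b2]) (use False in \<open>auto simp: aD_single insert_commute\<close>)
      have "((\<lambda>j. 0), {k,l}, i) \<in> WBasis p m n t" using a by (auto simp: inWB Y_def)
      moreover have "par m ((\<lambda>j. 0), {k,l}, i)" using a False by (simp add: par_def tau_def Y0Y1)
      ultimately show ?thesis unfolding Xe by (rule Eb_Weven)
    qed
  qed
qed

lemma LL_Weven: "(LL :: (widx \<Rightarrow> 'a::field) set) \<subseteq> Weven p m n t"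
  using lie_gen_Weven[OF G_Weven] by blast

lemma Weven_LL: "(Weven p m n t :: (widx \<Rightarrow> 'a::field) set) \<subseteq> LL"
proof
  fix X :: "widx \<Rightarrow> 'a" assume X: "X \<in> Weven p m n t"
  define A where "A = {a \<in> WBasis p m n t. X a \<noteq> 0}"
  have fA: "finite A" unfolding A_def using finite_WBasis by simp
  have gen: "finite B \<Longrightarrow> B \<subseteq> A \<Longrightarrow> (\<lambda>c. \<Sum>a\<in>B. X a * Eb a c) \<in> LL" for B
  proof (induction B rule: finite_induct)
    case empty
    show ?case using lie_gen.gen_zero by simp
  next
    case (insert x F)
    have xA: "x \<in> A" using insert by blast
    obtain \<alpha> u r where xe: "x = (\<alpha>,u,r)" by (metis prod_cases3)
    have xW: "(\<alpha>,u,r) \<in> WBasis p m n t" and xnz: "X (\<alpha>,u,r) \<noteq> 0" using xA xe unfolding A_def by auto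
    have "par m (\<alpha>,u,r)" using WevenD[OF X xnz] by blast
    then have Lx: "(Eb x :: widx \<Rightarrow> 'a) \<in> LL" using even_all[OF xW] xe by (simp add: par_def)
    have "(\<lambda>c. X x * Eb x c + (\<Sum>a\<in>F. X a * Eb a c)) \<in> LL"
      using lie_gen.gen_add[OF lie_gen.gen_smult[OF Lx] insert(3)] insert(4) by blast
    then show ?case using insert(1,2) by simp
  qed
  have "X = (\<lambda>c. \<Sum>a\<in>A. X a * Eb a c)"
  proof
    fix c
    have "(\<Sum>a\<in>A. X a * Eb a c) = (\<Sum>a\<in>A. if a = c then X c else 0)"
      by (intro sum.cong) (auto simp: Eb_def)
    also have "\<dots> = (if c \<in> A then X c else 0)" using fA by simp
    also have "\<dots> = X c" using WevenD[OF X, of c] unfolding A_def by auto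
    finally show "X c = (\<Sum>a\<in>A. X a * Eb a c)" by simp
  qed
  then show "X \<in> LL" using gen[OF fA] by simp
qed

end

theorem proposition2p2p1:
  fixes p m n :: nat and t :: "nat \<Rightarrow> nat"
  assumes "CHAR('a::field) = p" and "prime p" and "p > 3"
    and "m \<ge> 3" and "n \<ge> 3"
    and "\<forall>i\<in>Y0 m. t i > 0"
  shows "lie_gen p m n t (Mset p m n t \<union> Nset p m n t \<union> Pset p m n t)
           = (Weven p m n t :: (widx \<Rightarrow> 'a) set)"
proof -
  have pi3: "\<forall>i\<in>Y0 m. 3 \<le> piw p t i"
  proof
    fix i assume i: "i \<in> Y0 m"
    have "p \<le> p ^ t i" using assms(3) assms(6) i by (intro self_le_power) auto
    then show "3 \<le> piw p t i" using assms(3) by (simp add: piw_def)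
  qed
  interpret WG p m n t by unfold_locales (use pi3 assms(4) in auto)
  show ?thesis using LL_Weven Weven_LL by blast
qed

end
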